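(* Let $G\in\mathfrak{Y}_n$. (1) Every proper subnormal subgroup of $G$ is abelian. (2) If $G$ is not perfect (i.e. $G'\neq G$), then $G$ is metabelian.
   Context: $\mathfrak{Y}_n$ denotes the class of all groups $G$ (finite or infinite) such that $N_G(A)=A$ for every non-abelian subgroup $A\le G$. A group is metabelian if its derived subgroup is abelian. *)

theory Defs
  imports "HOL-Algebra.Algebra"
begin

definition abelian_set :: "('a, 'b) monoid_scheme \<Rightarrow> 'a set \<Rightarrow> bool" where
  "abelian_set G A \<longleftrightarrow> (\<forall>x\<in>A. \<forall>y\<in>A. x \<otimes>\<^bsub>G\<^esub> y = y \<otimes>\<^bsub>G\<^esub> x)"

definition Yn_class :: "('a, 'b) monoid_scheme \<Rightarrow> bool" where
  "Yn_class G \<longleftrightarrow> group G \<and>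
     (\<forall>A. subgroup A G \<and> \<not> abelian_set G A \<longrightarrow> normalizer G A = A)"

inductive subnormal :: "('a, 'b) monoid_scheme \<Rightarrow> 'a set \<Rightarrow> bool" for G where
  subnormal_top: "subnormal G (carrier G)"
| subnormal_step: "subnormal G K \<Longrightarrow> normal H (G\<lparr>carrier := K\<rparr>) \<Longrightarrow> subnormal G H"

definition metabelian :: "('a, 'b) monoid_scheme \<Rightarrow> bool" where
  "metabelian G \<longleftrightarrow> abelian_set G (derived G (carrier G))"

end

theory Submission
  imports Defs
begin

lemma (in group) conj_cancel_aux: "x \<in> carrier G \<Longrightarrow> h \<in> carrier G \<Longrightarrow> x \<otimes> (inv x \<otimes> h \<otimes> x) \<otimes> inv x = h"
  by (simp add: m_assoc flip: m_assoc[of x "inv x" h])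

lemma conj_mem_aux: "m \<in> H \<Longrightarrow> x \<otimes>\<^bsub>G\<^esub> m \<otimes>\<^bsub>G\<^esub> inv\<^bsub>G\<^esub> x \<in> x <#\<^bsub>G\<^esub> H #>\<^bsub>G\<^esub> inv\<^bsub>G\<^esub> x"
  unfolding l_coset_def r_coset_def by (intro UN_I[of "x \<otimes>\<^bsub>G\<^esub> m"] UN_I[of m]) auto

lemma normal_sub_normalizer:
  assumes gr: "group G" and K: "subgroup K G" and N: "normal H (G\<lparr>carrier := K\<rparr>)"
  shows "H \<subseteq> K" "subgroup H G" "K \<subseteq> normalizer G H"
proof -
  interpret G: group G by fact
  have HK: "subgroup H (G\<lparr>carrier := K\<rparr>)" using N normal_imp_subgroup by blast
  show HsK: "H \<subseteq> K" using subgroup.subset[OF HK] by simp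
  have Kc: "K \<subseteq> carrier G" using K subgroup.subset by blast
  have Hc: "H \<subseteq> carrier G" using HsK Kc by blast
  have "group ((G\<lparr>carrier := K\<rparr>)\<lparr>carrier := H\<rparr>)"
    using group.subgroup_imp_group[OF G.subgroup_imp_group[OF K] HK] .
  hence "group (G\<lparr>carrier := H\<rparr>)" by simp
  then show HG: "subgroup H G" using G.group_incl_imp_subgroup[OF Hc] by blast
  have conj: "x \<otimes>\<^bsub>G\<^esub> h \<otimes>\<^bsub>G\<^esub> inv\<^bsub>G\<^esub> x \<in> H" if "x \<in> K" "h \<in> H" for x h
  proof -
    have "x \<otimes>\<^bsub>G\<lparr>carrier := K\<rparr>\<^esub> h \<otimes>\<^bsub>G\<lparr>carrier := K\<rparr>\<^esub> inv\<^bsub>G\<lparr>carrier := K\<rparr>\<^esub> x \<in> H"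
      using normal.inv_op_closed2[OF N, of x h] that by simp
    moreover have "inv\<^bsub>G\<lparr>carrier := K\<rparr>\<^esub> x = inv\<^bsub>G\<^esub> x"
      using G.m_inv_consistent[OF K that(1)] .
    ultimately show ?thesis by simp
  qed
  show "K \<subseteq> normalizer G H"
  proof
    fix x assume x: "x \<in> K"
    hence xc: "x \<in> carrier G" using Kc by blast
    have "x <#\<^bsub>G\<^esub> H #>\<^bsub>G\<^esub> inv\<^bsub>G\<^esub> x = H"
    proof
      show "x <#\<^bsub>G\<^esub> H #>\<^bsub>G\<^esub> inv\<^bsub>G\<^esub> x \<subseteq> H"
      proof
        fix y assume "y \<in> x <#\<^bsub>G\<^esub> H #>\<^bsub>G\<^esub> inv\<^bsub>G\<^esub> x"
        then obtain z where z: "z \<in> x <#\<^bsub>G\<^esub> H" and yz: "y = z \<otimes>\<^bsub>G\<^esub> inv\<^bsub>G\<^esub> x"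
          unfolding r_coset_def by (auto elim!: UN_E)
        from z obtain h where h: "h \<in> H" and zh: "z = x \<otimes>\<^bsub>G\<^esub> h"
          unfolding l_coset_def by (auto elim!: UN_E)
        have y: "y = x \<otimes>\<^bsub>G\<^esub> h \<otimes>\<^bsub>G\<^esub> inv\<^bsub>G\<^esub> x" using yz zh by simp
        show "y \<in> H" unfolding y by (rule conj[OF x h])
      qed
      show "H \<subseteq> x <#\<^bsub>G\<^esub> H #>\<^bsub>G\<^esub> inv\<^bsub>G\<^esub> x"
      proof
        fix h assume h: "h \<in> H"
        have ix: "inv\<^bsub>G\<^esub> x \<in> K" using subgroup.m_inv_closed[OF K x] .
        have "inv\<^bsub>G\<^esub> x \<otimes>\<^bsub>G\<^esub> h \<otimes>\<^bsub>G\<^esub> inv\<^bsub>G\<^esub> (inv\<^bsub>G\<^esub> x) \<in> H"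
          using conj[OF ix h] .
        hence m: "inv\<^bsub>G\<^esub> x \<otimes>\<^bsub>G\<^esub> h \<otimes>\<^bsub>G\<^esub> x \<in> H" using xc by simp
        have hc: "h \<in> carrier G" using h Hc by blast
        have eq: "h = x \<otimes>\<^bsub>G\<^esub> (inv\<^bsub>G\<^esub> x \<otimes>\<^bsub>G\<^esub> h \<otimes>\<^bsub>G\<^esub> x) \<otimes>\<^bsub>G\<^esub> inv\<^bsub>G\<^esub> x"
          using xc hc by (rule G.conj_cancel_aux[symmetric])
        show "h \<in> x <#\<^bsub>G\<^esub> H #>\<^bsub>G\<^esub> inv\<^bsub>G\<^esub> x"
          using conj_mem_aux[OF m, of G x] by (simp only: eq[symmetric])
      qed
    qed
    thus "x \<in> normalizer G H"
      unfolding normalizer_def stabilizer_def using xc Hc by simp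
  qed
qed

lemma subnormal_main:
  assumes Y: "Yn_class G" and S: "subnormal G H"
  shows "subgroup H G \<and> (H = carrier G \<or> abelian_set G H)"
  using S
proof (induction rule: subnormal.induct)
  case subnormal_top
  have "group G" using Y Yn_class_def by blast
  then show ?case using group.subgroup_self by blast
next
  case (subnormal_step K H)
  have gr: "group G" using Y Yn_class_def by blast
  have K: "subgroup K G" using subnormal_step.IH by blast
  note L = normal_sub_normalizer[OF gr K subnormal_step.hyps(2)]
  show ?case
  proof (cases "abelian_set G H")
    case True then show ?thesis using L by blast
  next
    case False
    hence "normalizer G H = H" using Y L(2) Yn_class_def by blast
    hence "H = K" using L by blast
    moreover have "\<not> abelian_set G K" using False \<open>H = K\<close> by simp
    ultimately show ?thesis using subnormal_step.IH by blast
  qed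
qed

theorem proposition2p2:
  fixes G :: "('a, 'b) monoid_scheme"
  assumes "Yn_class G"
  shows "(\<forall>H. subnormal G H \<and> H \<noteq> carrier G \<longrightarrow> abelian_set G H) \<and>
         (derived G (carrier G) \<noteq> carrier G \<longrightarrow> metabelian G)"
proof -
  have A: "\<forall>H. subnormal G H \<and> H \<noteq> carrier G \<longrightarrow> abelian_set G H"
    using subnormal_main[OF assms] by blast
  have gr: "group G" using assms Yn_class_def by blast
  have "derived G (carrier G) \<lhd> G" using group.derived_self_is_normal[OF gr] .
  hence "normal (derived G (carrier G)) (G\<lparr>carrier := carrier G\<rparr>)" by simp
  hence "subnormal G (derived G (carrier G))"
    using subnormal.subnormal_top subnormal.subnormal_step by blast
  with A show ?thesis unfolding metabelian_def by blast
qed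

end
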